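(* Let $T=(V,E)$ be a binary $X$-tree and $x_1\neq x_2$ elements of $X$. If $P_{x_1}(T)\cap P_{x_2}(T)\neq\emptyset$, then every interior vertex of $T$ lies on the path from $x_1$ to $x_2$ in $T$ (so $T$ is a caterpillar tree with $x_1,x_2$ at opposite ends).
   Context: Let $X$ be a finite set with $|X|=n\ge 3$. A binary $X$-tree is a finite tree $T=(V,E)$ whose degree-1 vertices are exactly the elements of $X$ and all of whose other (interior) vertices have degree $3$. A cord is a $2$-subset $\{y,z\}$ of $X$, written $yz$. For $x\in X$, $P_x(T)$ is the collection of all sets of the form $\{ax: a\in X-\{x\}\}\cup\{y_vz_v: v\in V-X\}$, where for each interior vertex $v$, $y_v$ and $z_v$ are leaves chosen from the two distinct connected components of $T-v$ that do not contain $x$ (one from each). A caterpillar tree is a binary $X$-tree all of whose interior vertices lie on a single path. *)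

theory Defs
  imports Main
begin

definition walk_in :: "'a set \<Rightarrow> 'a set set \<Rightarrow> 'a list \<Rightarrow> bool" where
  "walk_in U E p \<longleftrightarrow> p \<noteq> [] \<and> set p \<subseteq> U \<and>
     (\<forall>i. Suc i < length p \<longrightarrow> {p ! i, p ! Suc i} \<in> E)"

definition reach :: "'a set \<Rightarrow> 'a set set \<Rightarrow> 'a \<Rightarrow> 'a \<Rightarrow> bool" where
  "reach U E a b \<longleftrightarrow> (\<exists>p. walk_in U E p \<and> hd p = a \<and> last p = b)"

definition is_cycle :: "'a set \<Rightarrow> 'a set set \<Rightarrow> 'a list \<Rightarrow> bool" where
  "is_cycle V E c \<longleftrightarrow> walk_in V E c \<and> distinct c \<and> length c \<ge> 3 \<and> {last c, hd c} \<in> E"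

definition is_tree :: "'a set \<Rightarrow> 'a set set \<Rightarrow> bool" where
  "is_tree V E \<longleftrightarrow> finite V \<and> V \<noteq> {} \<and> (\<forall>e\<in>E. e \<subseteq> V \<and> card e = 2) \<and>
     (\<forall>a\<in>V. \<forall>b\<in>V. reach V E a b) \<and> \<not> (\<exists>c. is_cycle V E c)"

definition degree :: "'a set set \<Rightarrow> 'a \<Rightarrow> nat" where
  "degree E v = card {e\<in>E. v \<in> e}"

definition binary_X_tree :: "'a set \<Rightarrow> 'a set \<Rightarrow> 'a set set \<Rightarrow> bool" where
  "binary_X_tree X V E \<longleftrightarrow> is_tree V E \<and> X \<subseteq> V \<and>
     (\<forall>v\<in>V. degree E v = 1 \<longleftrightarrow> v \<in> X) \<and> (\<forall>v\<in>V - X. degree E v = 3)"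

definition reach_minus :: "'a set \<Rightarrow> 'a set set \<Rightarrow> 'a \<Rightarrow> 'a \<Rightarrow> 'a \<Rightarrow> bool" where
  "reach_minus V E v a b = reach (V - {v}) {e\<in>E. v \<notin> e} a b"

text \<open>y, z are leaves lying in the two distinct components of T - v not containing x,
  one from each.\<close>
definition valid_pair :: "'a set \<Rightarrow> 'a set \<Rightarrow> 'a set set \<Rightarrow> 'a \<Rightarrow> 'a \<Rightarrow> 'a \<Rightarrow> 'a \<Rightarrow> bool" where
  "valid_pair X V E x v y z \<longleftrightarrow> y \<in> X \<and> z \<in> X \<and>
     \<not> reach_minus V E v x y \<and> \<not> reach_minus V E v x z \<and> \<not> reach_minus V E v y z"

definition P_set :: "'a set \<Rightarrow> 'a set \<Rightarrow> 'a set set \<Rightarrow> 'a \<Rightarrow> 'a set set set" where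
  "P_set X V E x = {S. \<exists>f g. (\<forall>v\<in>V - X. valid_pair X V E x v (f v) (g v)) \<and>
      S = {{a, x} | a. a \<in> X - {x}} \<union> {{f v, g v} | v. v \<in> V - X}}"

definition on_path :: "'a set \<Rightarrow> 'a set set \<Rightarrow> 'a \<Rightarrow> 'a \<Rightarrow> 'a \<Rightarrow> bool" where
  "on_path V E a b w \<longleftrightarrow> (\<exists>p. walk_in V E p \<and> distinct p \<and> hd p = a \<and> last p = b \<and> w \<in> set p)"

end

theory Submission
  imports Defs
begin

fun wk :: "'a set \<Rightarrow> 'a set set \<Rightarrow> 'a list \<Rightarrow> bool" where
  "wk U E [] = False"
| "wk U E [a] = (a \<in> U)"
| "wk U E (a # b # r) = (a \<in> U \<and> {a, b} \<in> E \<and> wk U E (b # r))"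

lemma walk_in_Cons2:
  "walk_in U E (a # b # r) \<longleftrightarrow> a \<in> U \<and> {a, b} \<in> E \<and> walk_in U E (b # r)"
proof
  assume h: "walk_in U E (a # b # r)"
  have all: "\<forall>i. Suc i < length (a # b # r) \<longrightarrow> {(a # b # r) ! i, (a # b # r) ! Suc i} \<in> E"
    using h unfolding walk_in_def by blast
  have "{a, b} \<in> E" using spec[OF all, of 0] by simp
  moreover have "\<forall>i. Suc i < length (b # r) \<longrightarrow> {(b#r) ! i, (b#r) ! Suc i} \<in> E"
  proof (intro allI impI)
    fix i assume "Suc i < length (b # r)"
    then have "Suc (Suc i) < length (a # b # r)" by simp
    then show "{(b#r) ! i, (b#r) ! Suc i} \<in> E" using spec[OF all, of "Suc i"] by simp
  qed
  ultimately show "a \<in> U \<and> {a, b} \<in> E \<and> walk_in U E (b # r)" using h unfolding walk_in_def by auto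
next
  assume h: "a \<in> U \<and> {a, b} \<in> E \<and> walk_in U E (b # r)"
  show "walk_in U E (a # b # r)" unfolding walk_in_def
  proof (intro conjI allI impI)
    show "set (a # b # r) \<subseteq> U" using h unfolding walk_in_def by auto
    fix i assume i: "Suc i < length (a # b # r)"
    show "{(a # b # r) ! i, (a # b # r) ! Suc i} \<in> E"
    proof (cases i)
      case 0 then show ?thesis using h by simp
    next
      case (Suc j)
      then show ?thesis using h i unfolding walk_in_def by auto
    qed
  qed simp
qed

lemma walk_in_wk: "walk_in U E p = wk U E p"
proof (induction U E p rule: wk.induct)
  case (1 U E) then show ?case by (simp add: walk_in_def)
next
  case (2 U E a) then show ?case by (simp add: walk_in_def)
next
  case (3 U E a b r) then show ?case by (simp add: walk_in_Cons2)
qed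

lemma reach_wk: "reach U E a b \<longleftrightarrow> (\<exists>p. wk U E p \<and> hd p = a \<and> last p = b)"
  by (simp add: reach_def walk_in_wk)

lemma wk_ne: "wk U E p \<Longrightarrow> p \<noteq> []" by auto

lemma wk_set: "wk U E p \<Longrightarrow> set p \<subseteq> U"
  by (induction U E p rule: wk.induct) auto

lemma wk_snoc: "wk U E xs \<Longrightarrow> {last xs, a} \<in> E \<Longrightarrow> a \<in> U \<Longrightarrow> wk U E (xs @ [a])"
  by (induction U E xs rule: wk.induct) auto

lemma wk_app: "wk U E xs \<Longrightarrow> wk U E ys \<Longrightarrow> last xs = hd ys \<Longrightarrow> wk U E (xs @ tl ys)"
  by (induction U E xs rule: wk.induct) (auto elim: wk.elims)

lemma wk_rev: "wk U E p \<Longrightarrow> wk U E (rev p)"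
proof (induction U E p rule: wk.induct)
  case (3 U E a b r)
  then have "wk U E (rev (b # r))" by simp
  moreover have "last (rev (b # r)) = b" by simp
  ultimately have "wk U E (rev (b # r) @ [a])"
    using 3(2) by (intro wk_snoc) (auto simp: insert_commute)
  then show ?case by simp
qed auto

lemma wk_prefix: "wk U E (xs @ ys) \<Longrightarrow> xs \<noteq> [] \<Longrightarrow> wk U E xs"
proof (induction xs)
  case (Cons a xs)
  then show ?case by (cases xs; cases ys) auto
qed simp

lemma wk_suffix: "wk U E (xs @ ys) \<Longrightarrow> ys \<noteq> [] \<Longrightarrow> wk U E ys"
proof (induction xs)
  case (Cons a xs)
  then show ?case by (cases xs; cases ys) auto
qed simp

lemma wk_mono: "wk U E p \<Longrightarrow> set p \<subseteq> U' \<Longrightarrow> d \<notin> set p \<Longrightarrow> wk U' {e\<in>E. d \<notin> e} p"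
  by (induction U E p rule: wk.induct) auto

lemma wk_distinct: "wk U E p \<Longrightarrow> \<exists>q. wk U E q \<and> distinct q \<and> hd q = hd p \<and> last q = last p \<and> set q \<subseteq> set p"
proof (induction U E p rule: wk.induct)
  case (2 U E a) then show ?case by (intro exI[of _ "[a]"]) auto
next
  case (3 U E a b r)
  then obtain q where q: "wk U E q" "distinct q" "hd q = b" "last q = last (b # r)" "set q \<subseteq> set (b # r)"
    by auto
  show ?case
  proof (cases "a \<in> set q")
    case True
    then obtain q1 q2 where qs: "q = q1 @ a # q2" by (meson split_list)
    then have "wk U E (a # q2)" using q(1) wk_suffix by blast
    moreover have "distinct (a # q2)" using q(2) qs by simp
    ultimately show ?thesis using q qs by (intro exI[of _ "a # q2"]) auto
  next
    case False
    obtain q' where q': "q = b # q'" using q(1,3) by (cases q) auto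
    have "wk U E (a # q)" using 3 q q' by simp
    then show ?thesis using q q' False by (intro exI[of _ "a # q"]) auto
  qed
qed auto

definition RR where "RR V E v a b = (\<exists>p. wk (V - {v}) {e\<in>E. v \<notin> e} p \<and> hd p = a \<and> last p = b)"

lemma RR_eq: "reach_minus V E v a b = RR V E v a b"
  by (simp add: reach_minus_def reach_wk RR_def)

lemma RR_refl: "a \<in> V \<Longrightarrow> a \<noteq> v \<Longrightarrow> RR V E v a a"
  unfolding RR_def by (intro exI[of _ "[a]"]) auto

lemma RR_sym: "RR V E v a b \<Longrightarrow> RR V E v b a"
proof -
  assume "RR V E v a b"
  then obtain p where p: "wk (V - {v}) {e\<in>E. v \<notin> e} p" "hd p = a" "last p = b" unfolding RR_def by blast
  have "wk (V - {v}) {e\<in>E. v \<notin> e} (rev p)" using wk_rev[OF p(1)] .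
  moreover have "hd (rev p) = b" "last (rev p) = a" using p wk_ne[OF p(1)] by (simp_all add: hd_rev last_rev)
  ultimately show "RR V E v b a" unfolding RR_def by blast
qed

lemma RR_trans: "RR V E v a b \<Longrightarrow> RR V E v b c \<Longrightarrow> RR V E v a c"
  unfolding RR_def
proof (elim exE conjE)
  fix p q
  assume h: "wk (V - {v}) {e \<in> E. v \<notin> e} p" "hd p = a" "last p = b"
    "wk (V - {v}) {e \<in> E. v \<notin> e} q" "hd q = b" "last q = c"
  have "wk (V - {v}) {e \<in> E. v \<notin> e} (p @ tl q)" using wk_app[OF h(1) h(4)] h(3,5) by simp
  moreover have "hd (p @ tl q) = a" using h(2) wk_ne[OF h(1)] by simp
  moreover have "last (p @ tl q) = c"
  proof (cases "tl q = []")
    case True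
    then have "q = [hd q]" using wk_ne[OF h(4)] by (cases q) auto
    then show ?thesis using h True by (cases q) auto
  next
    case False
    then have "last (p @ tl q) = last (tl q)" by simp
    also have "\<dots> = last q" using False by (cases q) auto
    finally show ?thesis using h by simp
  qed
  ultimately show "\<exists>p. wk (V - {v}) {e \<in> E. v \<notin> e} p \<and> hd p = a \<and> last p = c" by blast
qed

lemma RR_neg: "RR V E v b w \<Longrightarrow> \<not> RR V E v a b \<Longrightarrow> \<not> RR V E v a w"
proof
  assume h: "RR V E v b w" "\<not> RR V E v a b" "RR V E v a w"
  have "RR V E v a b" using RR_trans[OF h(3) RR_sym[OF h(1)]] .
  then show False using h(2) by simp
qed

lemma RR_neg2: "RR V E v a b \<Longrightarrow> \<not> RR V E v a w \<Longrightarrow> \<not> RR V E v b w"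
proof
  assume h: "RR V E v a b" "\<not> RR V E v a w" "RR V E v b w"
  have "RR V E v a w" using RR_trans[OF h(1) h(3)] .
  then show False using h(2) by simp
qed

lemma RR_nsym: "\<not> RR V E v a b \<Longrightarrow> \<not> RR V E v b a"
proof
  assume h: "\<not> RR V E v a b" "RR V E v b a"
  show False using RR_sym[OF h(2)] h(1) by simp
qed

lemma lemA:
  assumes conn: "\<forall>a\<in>V. \<forall>b\<in>V. reach V E a b"
    and p: "p \<in> V" "p \<noteq> c" and d: "d \<in> V" "d \<noteq> c" and c: "c \<in> V"
    and nr: "\<not> RR V E c p d"
  shows "RR V E d p c"
proof -
  have "reach V E p c" using conn p c by blast
  then obtain q where q: "wk V E q" "hd q = p" "last q = c" unfolding reach_wk by blast
  have "c \<in> set q" using q(3) wk_ne[OF q(1)] last_in_set by blast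
  then obtain ys zs where yz: "q = ys @ c # zs" "c \<notin> set ys" by (meson split_list_first)
  have ysne: "ys \<noteq> []" using yz q p by auto
  have w1: "wk V E (ys @ [c])" using q(1) yz wk_prefix[of V E "ys @ [c]" zs] by simp
  have hdys: "hd ys = p" using q yz ysne by simp
  have "d \<notin> set ys"
  proof
    assume "d \<in> set ys"
    then obtain us ts where ut: "ys = us @ d # ts" by (meson split_list)
    have "wk V E (us @ [d])" using w1 ut wk_prefix[of V E "us @ [d]" "ts @ [c]"] by simp
    moreover have "set (us @ [d]) \<subseteq> V - {c}" using ut yz wk_set[OF w1] by auto
    moreover have "c \<notin> set (us @ [d])" using ut yz by auto
    ultimately have "wk (V - {c}) {e\<in>E. c \<notin> e} (us @ [d])" by (rule wk_mono)
    moreover have "hd (us @ [d]) = p" using hdys ut by (cases us) auto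
    ultimately have "RR V E c p d" unfolding RR_def by (intro exI[of _ "us @ [d]"]) simp
    then show False using nr by simp
  qed
  then have "set (ys @ [c]) \<subseteq> V - {d}" "d \<notin> set (ys @ [c])" using wk_set[OF w1] d by auto
  then have "wk (V - {d}) {e\<in>E. d \<notin> e} (ys @ [c])" using wk_mono[OF w1] by blast
  moreover have "hd (ys @ [c]) = p" using hdys ysne by simp
  ultimately show ?thesis unfolding RR_def by (intro exI[of _ "ys @ [c]"]) simp
qed

lemma lemL:
  assumes conn: "\<forall>a\<in>V. \<forall>b\<in>V. reach V E a b"
    and "p \<in> V" "p \<noteq> c" "q \<in> V" "q \<noteq> c" "d \<in> V" "d \<noteq> c" "c \<in> V"
    and "\<not> RR V E c p d" "\<not> RR V E c q d"
  shows "RR V E d p q"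
proof -
  have "RR V E d p c" using lemA[OF conn, of p c d] assms by blast
  moreover have "RR V E d q c" using lemA[OF conn, of q c d] assms by blast
  ultimately show ?thesis by (rule RR_trans[OF _ RR_sym])
qed

lemma lemU:
  assumes conn: "\<forall>a\<in>V. \<forall>b\<in>V. reach V E a b"
    and V: "a \<in> V" "b \<in> V" "e \<in> V" "c \<in> V" "d \<in> V"
    and ne: "c \<noteq> d" "a \<noteq> c" "b \<noteq> c" "e \<noteq> c" "a \<noteq> d" "b \<noteq> d" "e \<noteq> d"
    and nc: "\<not> RR V E c a b" "\<not> RR V E c a e" "\<not> RR V E c b e"
    and nd: "\<not> RR V E d a b" "\<not> RR V E d a e" "\<not> RR V E d b e"
  shows False
proof (cases "RR V E c a d")
  case True
  have "\<not> RR V E c b d"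
  proof
    assume "RR V E c b d" then have "RR V E c a b" using RR_trans[OF True RR_sym] by blast
    then show False using nc by blast
  qed
  moreover have "\<not> RR V E c e d"
  proof
    assume "RR V E c e d" then have "RR V E c a e" using RR_trans[OF True RR_sym] by blast
    then show False using nc by blast
  qed
  ultimately have "RR V E d b e" using lemL[OF conn, of b c e d] V ne by auto
  then show False using nd by blast
next
  case F: False
  show False
  proof (cases "RR V E c b d")
    case True
    have "\<not> RR V E c e d"
    proof
      assume "RR V E c e d" then have "RR V E c b e" using RR_trans[OF True RR_sym] by blast
      then show False using nc by blast
    qed
    then have "RR V E d a e" using F lemL[OF conn, of a c e d] V ne by auto
    then show False using nd by blast
  next
    case False
    then have "RR V E d a b" using F lemL[OF conn, of a c b d] V ne by auto
    then show False using nd by blast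
  qed
qed

lemma lemB:
  assumes conn: "\<forall>a\<in>V. \<forall>b\<in>V. reach V E a b"
    and "x1 \<in> V" "x2 \<in> V" and np: "\<not> on_path V E x1 x2 v"
  shows "RR V E v x1 x2"
proof -
  have "reach V E x1 x2" using conn assms by blast
  then obtain p where p: "wk V E p" "hd p = x1" "last p = x2" unfolding reach_wk by blast
  obtain q where q: "wk V E q" "distinct q" "hd q = x1" "last q = x2"
    using wk_distinct[OF p(1)] p(2,3) by blast
  have "v \<notin> set q"
  proof
    assume "v \<in> set q"
    then have "on_path V E x1 x2 v" unfolding on_path_def walk_in_wk using q by blast
    then show False using np by contradiction
  qed
  moreover have "set q \<subseteq> V - {v}" using wk_set[OF q(1)] calculation by blast
  ultimately have "wk (V - {v}) {e\<in>E. v \<notin> e} q" using wk_mono[OF q(1)] by blast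
  then show ?thesis unfolding RR_def using q(3,4) by blast
qed

theorem mainTheorem5:
  fixes X V :: "'a set" and E :: "'a set set" and x1 x2 :: 'a
  assumes "binary_X_tree X V E" and "card X \<ge> 3"
    and "x1 \<in> X" and "x2 \<in> X" and "x1 \<noteq> x2"
    and "P_set X V E x1 \<inter> P_set X V E x2 \<noteq> {}"
  shows "\<forall>v\<in>V - X. on_path V E x1 x2 v"
proof (rule ballI, rule ccontr)
  fix v assume v: "v \<in> V - X" and np: "\<not> on_path V E x1 x2 v"
  have conn: "\<forall>a\<in>V. \<forall>b\<in>V. reach V E a b" and XV: "X \<subseteq> V"
    using assms(1) unfolding binary_X_tree_def is_tree_def by auto
  obtain S where S: "S \<in> P_set X V E x1" "S \<in> P_set X V E x2" using assms(6) by blast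
  obtain f g where fg: "\<forall>w\<in>V - X. valid_pair X V E x1 w (f w) (g w)"
    and Sdef: "S = {{a, x1} | a. a \<in> X - {x1}} \<union> {{f w, g w} | w. w \<in> V - X}"
    using S(1) unfolding P_set_def by blast
  have x12V: "x1 \<in> V" "x2 \<in> V" using assms XV by auto
  have Rv12: "RR V E v x1 x2" using lemB[OF conn x12V np] .
  define y where "y = f v"
  define z where "z = g v"
  have vp: "y \<in> X" "z \<in> X" "\<not> RR V E v x1 y" "\<not> RR V E v x1 z" "\<not> RR V E v y z"
    using fg v unfolding valid_pair_def y_def z_def RR_eq by auto
  have yzV: "y \<in> V" "z \<in> V" using vp XV by auto
  have vnX: "v \<noteq> x1" "v \<noteq> x2" "v \<noteq> y" "v \<noteq> z" using v vp assms by auto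
  have "y \<noteq> x2" using Rv12 vp by auto
  have "z \<noteq> x2" using Rv12 vp by auto
  have "y \<noteq> z" using vp(5) RR_refl[OF yzV(1), of v E] vnX by auto
  have "y \<noteq> x1" using vp(3) RR_refl[OF x12V(1), of v E] vnX by auto
  have "z \<noteq> x1" using vp(4) RR_refl[OF x12V(1), of v E] vnX by auto
  have inS: "\<And>a. a \<in> X - {x2} \<Longrightarrow> {a, x2} \<in> S"
  proof -
    fix a assume "a \<in> X - {x2}"
    obtain f2 g2 where "S = {{a, x2} | a. a \<in> X - {x2}} \<union> {{f2 w, g2 w} | w. w \<in> V - X}"
      using S(2) unfolding P_set_def by blast
    then show "{a, x2} \<in> S" using \<open>a \<in> X - {x2}\<close> by blast
  qed
  have getw: "\<And>a. a \<in> X \<Longrightarrow> a \<noteq> x1 \<Longrightarrow> a \<noteq> x2 \<Longrightarrow>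
      \<exists>w\<in>V - X. {a, x2} = {f w, g w} \<and> \<not> RR V E w x1 a \<and> \<not> RR V E w x1 x2 \<and> \<not> RR V E w a x2"
  proof -
    fix a assume a: "a \<in> X" "a \<noteq> x1" "a \<noteq> x2"
    have "{a, x2} \<in> S" using inS a by blast
    moreover have "{a, x2} \<notin> {{b, x1} | b. b \<in> X - {x1}}" using a assms(5) by (auto simp: doubleton_eq_iff)
    ultimately obtain w where w: "w \<in> V - X" "{a, x2} = {f w, g w}" using Sdef by blast
    have vw: "\<not> RR V E w x1 (f w)" "\<not> RR V E w x1 (g w)" "\<not> RR V E w (f w) (g w)"
      using fg w unfolding valid_pair_def RR_eq by auto
    from w(2) have "(f w = a \<and> g w = x2) \<or> (f w = x2 \<and> g w = a)" by (auto simp: doubleton_eq_iff)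
    then have "\<not> RR V E w x1 a \<and> \<not> RR V E w x1 x2 \<and> \<not> RR V E w a x2"
    proof
      assume "f w = a \<and> g w = x2" then show ?thesis using vw by simp
    next
      assume "f w = x2 \<and> g w = a" then show ?thesis using vw RR_nsym[OF vw(3)] by simp
    qed
    then show "\<exists>w\<in>V - X. {a, x2} = {f w, g w} \<and> \<not> RR V E w x1 a \<and> \<not> RR V E w x1 x2 \<and> \<not> RR V E w a x2"
      using w by blast
  qed
  obtain w where w: "w \<in> V - X" "{y, x2} = {f w, g w}" "\<not> RR V E w x1 y" "\<not> RR V E w x1 x2" "\<not> RR V E w y x2"
    using getw[OF vp(1) \<open>y \<noteq> x1\<close> \<open>y \<noteq> x2\<close>] by blast
  obtain w' where w': "w' \<in> V - X" "{z, x2} = {f w', g w'}" "\<not> RR V E w' x1 z" "\<not> RR V E w' x1 x2" "\<not> RR V E w' z x2"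
    using getw[OF vp(2) \<open>z \<noteq> x1\<close> \<open>z \<noteq> x2\<close>] by blast
  have wV: "w \<in> V" "w \<noteq> v" using w Rv12 by auto
  have wn: "w \<noteq> x1" "w \<noteq> x2" "w \<noteq> y" "w \<noteq> z" using w vp assms by auto
  have w'n: "w' \<in> V" "w' \<noteq> x1" "w' \<noteq> x2" "w' \<noteq> z" using w' vp assms by auto
  have Rwyz: "RR V E w y z"
  proof (cases "RR V E v y w")
    case True
    have "\<not> RR V E v x1 w" using RR_neg[OF True vp(3)] .
    moreover have "\<not> RR V E v x2 w" using RR_neg2[OF Rv12 calculation] .
    ultimately have "RR V E w x1 x2" using lemL[OF conn] x12V wV vnX[symmetric] v by auto
    then show ?thesis using w by simp
  next
    case F1: False
    show ?thesis
    proof (cases "RR V E v z w")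
      case True
      have "\<not> RR V E v x1 w" using RR_neg[OF True vp(4)] .
      moreover have "\<not> RR V E v y w" using RR_neg[OF True vp(5)] .
      ultimately have "RR V E w x1 y" using lemL[OF conn] x12V yzV wV vnX[symmetric] v by auto
      then show ?thesis using w by simp
    next
      case False
      then show ?thesis using F1 lemL[OF conn] yzV wV vnX[symmetric] v by auto
    qed
  qed
  have n1: "\<not> RR V E w x1 z" using RR_neg[OF Rwyz w(3)] .
  have n2: "\<not> RR V E w x2 z" using RR_neg[OF Rwyz RR_nsym[OF w(5)]] .
  have n3: "\<not> RR V E w' x2 z" using RR_nsym[OF w'(5)] .
  have "w = w'"
  proof (rule ccontr)
    assume "w \<noteq> w'"
    show False
      using lemU[OF conn x12V(1) x12V(2) yzV(2) wV(1) w'n(1) \<open>w \<noteq> w'\<close>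
        wn(1)[symmetric] wn(2)[symmetric] wn(4)[symmetric] w'n(2)[symmetric] w'n(3)[symmetric] w'n(4)[symmetric]
        w(4) n1 n2 w'(4) w'(3) n3] .
  qed
  then have "{y, x2} = {z, x2}" using w w' by simp
  then have "y = z" using \<open>y \<noteq> x2\<close> by (auto simp: doubleton_eq_iff)
  then show False using \<open>y \<noteq> z\<close> by simp
qed

end
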